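(* Let $X$ and $Y$ be Banach spaces and let $F:X\to Y$ be continuous and Gâteaux-differentiable, with $F(0)=0$. Let $R>0$ and $m>0$, and assume that for every $x\in X$ with $\|x\|\le R$ the derivative $DF(x)$ has a right-inverse $L(x)$ (a bounded linear map $Y\to X$ with $DF(x)L(x)v=v$ for all $v\in Y$) satisfying $\|L(x)\|\le m$. Then for every $\bar y\in Y$ with $\|\bar y\|<R/m$ and every $\mu>m$ there is some $\bar x\in X$ such that $\|\bar x\|<R$, $\|\bar x\|\le\mu\|\bar y\|$, and $F(\bar x)=\bar y$.
   Context: $F$ is Gâteaux-differentiable at $x$ if there is a continuous linear map $DF(x):X\to Y$ such that for every $u\in X$, $\lim_{t\to0}\|(F(x+tu)-F(x))/t-DF(x)u\|=0$. *)

theory Defs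
  imports "HOL-Analysis.Analysis"
begin

definition gateaux_deriv :: "('a::real_normed_vector \<Rightarrow> 'b::real_normed_vector) \<Rightarrow> 'a \<Rightarrow> ('a \<Rightarrow> 'b) \<Rightarrow> bool" where
  "gateaux_deriv F x D \<longleftrightarrow> bounded_linear D \<and>
     (\<forall>u. ((\<lambda>t::real. (F (x + t *\<^sub>R u) - F x) /\<^sub>R t) \<longlongrightarrow> D u) (at 0))"

end

theory Submission
  imports Defs
begin

lemma ekeland:
  fixes f :: "'a::complete_space \<Rightarrow> real"
  assumes cont: "continuous_on UNIV f" and nn: "\<And>x. f x \<ge> 0" and a: "a > 0"
  shows "\<exists>xb. f xb + a * dist xb x0 \<le> f x0 \<and> (\<forall>z. f xb \<le> f z + a * dist z xb)"
proof -
  define S where "S x = {z. f z + a * dist z x \<le> f x}" for x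
  have Sself: "x \<in> S x" for x by (simp add: S_def)
  have Strans: "w \<in> S x" if "z \<in> S x" "w \<in> S z" for x z w
  proof -
    have "dist w x \<le> dist w z + dist z x" by (rule dist_triangle)
    then have "a * dist w x \<le> a * (dist w z + dist z x)" using a by (simp add: mult_left_mono)
    then show ?thesis using that by (simp add: S_def distrib_left)
  qed
  have bdd: "bdd_below (f ` S x)" for x by (rule bdd_belowI[of _ 0]) (use nn in auto)
  have ex: "\<exists>z. z \<in> S x \<and> f z \<le> Inf (f ` S x) + e" if "e > 0" for x e
  proof -
    have "Inf (f ` S x) < Inf (f ` S x) + e" using that by simp
    from cInf_lessD[OF _ this] Sself obtain w where "w \<in> f ` S x" "w < Inf (f ` S x) + e" by blast
    then show ?thesis by force
  qed
  define step where "step n x = (SOME z. z \<in> S x \<and> f z \<le> Inf (f ` S x) + 1/real(Suc n))" for n x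
  have stepP: "step n x \<in> S x \<and> f (step n x) \<le> Inf (f ` S x) + 1/real(Suc n)" for n x
    unfolding step_def by (rule someI_ex, rule ex) simp
  define xs where "xs = rec_nat x0 (\<lambda>n x. step n x)"
  have xs0: "xs 0 = x0" and xsS: "xs (Suc n) = step n (xs n)" for n by (simp_all add: xs_def)
  have mono: "S (xs m) \<subseteq> S (xs n)" if "n \<le> m" for m n
    using that
  proof (induction m rule: dec_induct)
    case base then show ?case by simp
  next
    case (step k)
    have "S (xs (Suc k)) \<subseteq> S (xs k)"
      using Strans stepP[of k "xs k"] by (auto simp: xsS)
    then show ?case using step.IH by blast
  qed
  have inS: "xs m \<in> S (xs n)" if "n \<le> m" for m n using mono[OF that] Sself by blast
  have small: "a * dist z (xs (Suc n)) \<le> 1/real(Suc n)" if "z \<in> S (xs (Suc n))" for z n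
  proof -
    have "z \<in> S (xs n)" using mono[of n "Suc n"] that by auto
    then have "Inf (f ` S (xs n)) \<le> f z" by (intro cInf_lower bdd) auto
    moreover have "f (xs (Suc n)) \<le> Inf (f ` S (xs n)) + 1/real(Suc n)" using stepP by (simp add: xsS)
    moreover have "f z + a * dist z (xs (Suc n)) \<le> f (xs (Suc n))" using that by (simp add: S_def)
    ultimately show ?thesis by linarith
  qed
  have C: "Cauchy xs"
    unfolding Cauchy_def
  proof (intro allI impI)
    fix e :: real assume e: "e > 0"
    then have "a * e / 2 > 0" using a by simp
    then obtain N where N: "inverse (real (Suc N)) < a * e / 2" using reals_Archimedean by blast
    have d: "dist (xs m) (xs (Suc N)) < e / 2" if "m \<ge> Suc N" for m
    proof -
      have "a * dist (xs m) (xs (Suc N)) \<le> 1/real(Suc N)" using small inS[OF that] by blast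
      also have "\<dots> < a * e / 2" using N by (simp add: inverse_eq_divide)
      finally have "a * dist (xs m) (xs (Suc N)) < a * (e / 2)" by simp
      then show ?thesis using a by (simp add: mult_less_cancel_left_pos)
    qed
    show "\<exists>M. \<forall>m\<ge>M. \<forall>n\<ge>M. dist (xs m) (xs n) < e"
    proof (intro exI allI impI)
      fix m n assume "m \<ge> Suc N" "n \<ge> Suc N"
      then have "dist (xs m) (xs (Suc N)) < e/2" "dist (xs n) (xs (Suc N)) < e/2" using d by auto
      moreover have "dist (xs m) (xs n) \<le> dist (xs m) (xs (Suc N)) + dist (xs n) (xs (Suc N))"
        by (rule dist_triangle2)
      ultimately show "dist (xs m) (xs n) < e" by linarith
    qed
  qed
  then obtain xb where lim: "xs \<longlonglongrightarrow> xb" using Cauchy_convergent convergent_def by blast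
  have ic: "isCont f x" for x using cont by (simp add: continuous_on_eq_continuous_at)
  have xbS: "xb \<in> S (xs n)" for n
  proof -
    have "(\<lambda>m. f (xs m) + a * dist (xs m) (xs n)) \<longlonglongrightarrow> f xb + a * dist xb (xs n)"
      by (intro tendsto_intros isCont_tendsto_compose[OF ic lim] lim)
    then have "f xb + a * dist xb (xs n) \<le> f (xs n)"
      by (rule LIMSEQ_le_const2) (use inS in \<open>auto simp: S_def\<close>)
    then show ?thesis by (simp add: S_def)
  qed
  have "\<forall>z. f xb \<le> f z + a * dist z xb"
  proof (rule ccontr)
    assume "\<not> ?thesis"
    then obtain z where z: "f z + a * dist z xb < f xb" by (auto simp: not_le)
    then have zS: "z \<in> S xb" by (simp add: S_def)
    have b: "a * dist z xb \<le> 2/real(Suc n)" for n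
    proof -
      have "a * dist z (xs (Suc n)) \<le> 1/real(Suc n)" using small Strans[OF xbS zS] by blast
      moreover have "a * dist xb (xs (Suc n)) \<le> 1/real(Suc n)" using small xbS by blast
      moreover have "dist z xb \<le> dist z (xs (Suc n)) + dist xb (xs (Suc n))" by (rule dist_triangle2)
      then have "a * dist z xb \<le> a * dist z (xs (Suc n)) + a * dist xb (xs (Suc n))"
        using a by (metis distrib_left mult_left_mono less_imp_le)
      ultimately show ?thesis by simp
    qed
    have "dist z xb = 0"
    proof (rule ccontr)
      assume "dist z xb \<noteq> 0"
      then have "a * dist z xb / 2 > 0" using a by simp
      then obtain n where n: "inverse (real (Suc n)) < a * dist z xb / 2" using reals_Archimedean by blast
      then show False using b[of n] by (simp add: inverse_eq_divide)
    qed
    then have "z = xb" by simp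
    then show False using z by simp
  qed
  moreover have "f xb + a * dist xb x0 \<le> f x0" using xbS[of 0] by (simp add: S_def xs0)
  ultimately show ?thesis by blast
qed

theorem theorem2:
  fixes F :: "'a::banach \<Rightarrow> 'b::banach"
    and DF :: "'a \<Rightarrow> 'a \<Rightarrow> 'b"
    and L :: "'a \<Rightarrow> 'b \<Rightarrow> 'a"
    and R m :: real
  assumes contF: "continuous_on UNIV F"
    and gat: "\<And>x. gateaux_deriv F x (DF x)"
    and F0: "F 0 = 0"
    and Rpos: "R > 0" and mpos: "m > 0"
    and Llin: "\<And>x. norm x \<le> R \<Longrightarrow> bounded_linear (L x)"
    and Lright: "\<And>x v. norm x \<le> R \<Longrightarrow> DF x (L x v) = v"
    and Lnorm: "\<And>x. norm x \<le> R \<Longrightarrow> onorm (L x) \<le> m"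
  shows "\<forall>ybar::'b. norm ybar < R / m \<longrightarrow> (\<forall>\<mu>>m. \<exists>xbar::'a.
           norm xbar < R \<and> norm xbar \<le> \<mu> * norm ybar \<and> F xbar = ybar)"
proof (intro allI impI)
  fix y :: 'b and \<mu> :: real
  assume y: "norm y < R / m" and mu: "\<mu> > m"
  show "\<exists>xbar::'a. norm xbar < R \<and> norm xbar \<le> \<mu> * norm y \<and> F xbar = y"
  proof (cases "y = 0")
    case True then show ?thesis using F0 Rpos by (intro exI[of _ 0]) simp
  next
    case False
    then have ny: "norm y > 0" by simp
    have my: "m * norm y < R" using y mpos by (simp add: field_simps)
    define \<mu>' where "\<mu>' = min \<mu> ((m + R / norm y) / 2)"
    have Rny: "R / norm y > m" using my ny by (simp add: field_simps)
    have mu1: "\<mu>' > m" "\<mu>' \<le> \<mu>" using mu Rny by (auto simp: \<mu>'_def)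
    have mule: "\<mu>' \<le> (m + R / norm y) / 2" unfolding \<mu>'_def by (rule min.cobounded2)
    have "\<mu>' * norm y \<le> (m + R / norm y) / 2 * norm y"
      using ny mule by (intro mult_right_mono) simp_all
    also have "\<dots> = (m * norm y + R) / 2" using ny by (simp add: field_simps)
    also have "\<dots> < R" using my by simp
    finally have mu2: "\<mu>' * norm y < R" .
    define a where "a = 1 / \<mu>'"
    have apos: "a > 0" using mu1 mpos by (simp add: a_def)
    have am: "a * m < 1" using mu1 mpos by (simp add: a_def field_simps)
    define f where "f x = norm (F x - y)" for x
    have cf: "continuous_on UNIV f" unfolding f_def
      by (intro continuous_intros contF)
    obtain xb where xb1: "f xb + a * dist xb 0 \<le> f 0" and xb2: "\<And>z. f xb \<le> f z + a * dist z xb"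
      using ekeland[OF cf _ apos, of 0] by (auto simp: f_def)
    have "norm (F xb - y) + a * norm xb \<le> norm y" using xb1 F0 by (simp add: f_def)
    then have "a * norm xb \<le> norm y" using norm_ge_zero[of "F xb - y"] by linarith
    then have "norm xb \<le> \<mu>' * norm y" using mu1 mpos by (simp add: a_def field_simps)
    then have nxb: "norm xb \<le> \<mu> * norm y" "norm xb < R"
      using mu2 mu1 ny by (auto intro: order_trans mult_right_mono)
    have "F xb = y"
    proof (rule ccontr)
      assume ne: "F xb \<noteq> y"
      define v where "v = y - F xb"
      have nv: "norm v > 0" using ne by (simp add: v_def)
      define u where "u = L xb v"
      have nu: "norm u \<le> m * norm v"
      proof -
        have "norm u \<le> onorm (L xb) * norm v" unfolding u_def using Llin nxb by (intro onorm) auto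
        also have "\<dots> \<le> m * norm v" using Lnorm nxb by (intro mult_right_mono) auto
        finally show ?thesis .
      qed
      have Du: "DF xb u = v" unfolding u_def using Lright nxb by auto
      define q where "q t = (F (xb + t *\<^sub>R u) - F xb) /\<^sub>R t" for t :: real
      have lim: "(q \<longlongrightarrow> v) (at 0)" unfolding q_def Du[symmetric] using gat[of xb] by (simp add: gateaux_deriv_def)
      define c where "c = (1 - a * m) * norm v"
      have cpos: "c > 0" using am nv by (simp add: c_def)
      have "eventually (\<lambda>t. dist (q t) v < c) (at 0)" using lim cpos by (rule tendstoD)
      then obtain d where d: "d > 0" "\<And>t. t \<noteq> 0 \<and> dist t 0 < d \<longrightarrow> dist (q t) v < c"
        by (auto simp: eventually_at)
      define t where "t = min (d/2) (1/2)"
      have t: "t > 0" "t \<le> 1" "t < d" using d by (auto simp: t_def)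
      have qt: "norm (q t - v) < c" using d(2)[of t] t by (simp add: dist_norm)
      have eq: "F (xb + t *\<^sub>R u) - y = t *\<^sub>R (q t - v) - (1 - t) *\<^sub>R v"
        using t by (simp add: q_def v_def algebra_simps)
      have "norm (F (xb + t *\<^sub>R u) - y) \<le> norm (t *\<^sub>R (q t - v)) + norm ((1 - t) *\<^sub>R v)"
        unfolding eq by (rule norm_triangle_ineq4)
      also have "\<dots> = t * norm (q t - v) + (1 - t) * norm v" using t by simp
      finally have A: "f (xb + t *\<^sub>R u) \<le> t * norm (q t - v) + (1 - t) * norm v" by (simp add: f_def)
      have B: "norm v \<le> f (xb + t *\<^sub>R u) + a * (t * norm u)"
        using xb2[of "xb + t *\<^sub>R u"] t by (simp add: f_def v_def dist_norm norm_minus_commute)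
      have "a * (t * norm u) \<le> a * (t * (m * norm v))"
        using nu t apos by (intro mult_left_mono) auto
      with A B have "norm v \<le> t * norm (q t - v) + (1 - t) * norm v + t * (a * m * norm v)"
        by (simp add: algebra_simps)
      then have "t * ((1 - a * m) * norm v) \<le> t * norm (q t - v)" by (simp add: algebra_simps)
      then have "c \<le> norm (q t - v)" using t by (simp add: c_def)
      then show False using qt by simp
    qed
    then show ?thesis using nxb by blast
  qed
qed

end
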